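(* For all integers $n\ge2$ and $m\ge1$, \[ \mathrm{pw}(K_n\wedge K_m)=n+\max\!\left(0,\ m-\left\lfloor \tfrac n2\right\rfloor\right)-1. \]
   Context: Graphs are finite, simple and undirected. $K_n$ is the complete graph on $n$ vertices. The corona $G_1\wedge G_2$ is the graph obtained from the disjoint union of one copy of $G_1$ and $|V(G_1)|$ copies of $G_2$, one copy $G_2^{(x)}$ for each $x\in V(G_1)$, by joining each vertex $x$ of $G_1$ to all vertices of its copy $G_2^{(x)}$. $\mathrm{pw}$ denotes path-width (minimum over path-decompositions of the maximum bag size minus one). *)

theory Defs
  imports Main
begin

text \<open>Finite simple graphs: a vertex set V and an edge set E of 2-element subsets of V.\<close>

definition is_path_decomposition :: "'a set \<Rightarrow> 'a set set \<Rightarrow> 'a set list \<Rightarrow> bool" where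
  "is_path_decomposition V E bs \<longleftrightarrow>
     bs \<noteq> [] \<and>
     (\<forall>i<length bs. bs ! i \<subseteq> V) \<and>
     (\<forall>v\<in>V. \<exists>i<length bs. v \<in> bs ! i) \<and>
     (\<forall>e\<in>E. \<exists>i<length bs. e \<subseteq> bs ! i) \<and>
     (\<forall>v i j k. i \<le> j \<and> j \<le> k \<and> k < length bs \<and> v \<in> bs ! i \<and> v \<in> bs ! k
                  \<longrightarrow> v \<in> bs ! j)"

definition pd_width :: "'a set list \<Rightarrow> int" where
  "pd_width bs = int (Max (card ` set bs)) - 1"

definition pathwidth :: "'a set \<Rightarrow> 'a set set \<Rightarrow> int" where
  "pathwidth V E = (LEAST w. \<exists>bs. is_path_decomposition V E bs \<and> pd_width bs = w)"

definition complete_edges :: "'a set \<Rightarrow> 'a set set" where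
  "complete_edges V = {{x, y} | x y. x \<in> V \<and> y \<in> V \<and> x \<noteq> y}"

text \<open>Corona K_n \<and> K_m: core vertices (i, None) for i < n, the copy of K_m attached to
  core vertex i has vertices (i, Some j) for j < m.\<close>
definition corona_KK_vertices :: "nat \<Rightarrow> nat \<Rightarrow> (nat \<times> nat option) set" where
  "corona_KK_vertices n m = {(i, None) | i. i < n} \<union> {(i, Some j) | i j. i < n \<and> j < m}"

definition corona_KK_edges :: "nat \<Rightarrow> nat \<Rightarrow> (nat \<times> nat option) set set" where
  "corona_KK_edges n m =
     complete_edges {(i, None) | i. i < n}
     \<union> (\<Union>i<n. complete_edges {(i, Some j) | j. j < m})
     \<union> {{(i, None), (i, Some j)} | i j. i < n \<and> j < m}"

end

theory Submission
  imports Defs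
begin

lemma corona_fin: "finite (corona_KK_vertices n m)"
proof -
  have "corona_KK_vertices n m \<subseteq> {..<n} \<times> (insert None (Some ` {..<m}))"
    unfolding corona_KK_vertices_def by auto
  then show ?thesis by (rule finite_subset) auto
qed

lemma edges_cases:
  assumes "e \<in> corona_KK_edges n m"
  shows "(\<exists>x y. e = {(x,None),(y,None)} \<and> x<n \<and> y<n) \<or>
         (\<exists>i x y. e = {(i,Some x),(i,Some y)} \<and> i<n \<and> x<m \<and> y<m) \<or>
         (\<exists>i j. e = {(i,None),(i,Some j)} \<and> i<n \<and> j<m)"
  using assms unfolding corona_KK_edges_def complete_edges_def by blast

lemma pd_parts:
  assumes "is_path_decomposition V E bs"
  shows "\<forall>i<length bs. bs ! i \<subseteq> V" "\<forall>v\<in>V. \<exists>i<length bs. v \<in> bs ! i"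
    "\<forall>e\<in>E. \<exists>i<length bs. e \<subseteq> bs ! i"
    "\<forall>v i j k. i \<le> j \<and> j \<le> k \<and> k < length bs \<and> v \<in> bs ! i \<and> v \<in> bs ! k \<longrightarrow> v \<in> bs ! j"
proof -
  note h = assms[unfolded is_path_decomposition_def]
  show "\<forall>i<length bs. bs ! i \<subseteq> V" by (rule h[THEN conjunct2, THEN conjunct1])
  show "\<forall>v\<in>V. \<exists>i<length bs. v \<in> bs ! i" by (rule h[THEN conjunct2, THEN conjunct2, THEN conjunct1])
  show "\<forall>e\<in>E. \<exists>i<length bs. e \<subseteq> bs ! i" by (rule h[THEN conjunct2, THEN conjunct2, THEN conjunct2, THEN conjunct1])
  show "\<forall>v i j k. i \<le> j \<and> j \<le> k \<and> k < length bs \<and> v \<in> bs ! i \<and> v \<in> bs ! k \<longrightarrow> v \<in> bs ! j"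
    by (rule h[THEN conjunct2, THEN conjunct2, THEN conjunct2, THEN conjunct2])
qed

lemma pd_sub: "is_path_decomposition V E bs \<Longrightarrow> k < length bs \<Longrightarrow> bs!k \<subseteq> V"
  using pd_parts(1) by blast
lemma pd_cov: "is_path_decomposition V E bs \<Longrightarrow> v \<in> V \<Longrightarrow> \<exists>i<length bs. v \<in> bs!i"
  using pd_parts(2) by blast
lemma pd_edge: "is_path_decomposition V E bs \<Longrightarrow> e \<in> E \<Longrightarrow> \<exists>i<length bs. e \<subseteq> bs!i"
  using pd_parts(3) by blast
lemma pd_conv: "is_path_decomposition V E bs \<Longrightarrow> i \<le> j \<Longrightarrow> j \<le> k \<Longrightarrow> k < length bs
   \<Longrightarrow> v \<in> bs!i \<Longrightarrow> v \<in> bs!k \<Longrightarrow> v \<in> bs!j"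
  using pd_parts(4) by blast

lemma helly:
  assumes pd: "is_path_decomposition V E bs" and fin: "finite S" and ne: "S \<noteq> {}"
    and sub: "S \<subseteq> V" and cl: "\<forall>x\<in>S. \<forall>y\<in>S. x \<noteq> y \<longrightarrow> {x,y} \<in> E"
  shows "\<exists>i<length bs. S \<subseteq> bs!i"
proof -
  define l where "l v = (LEAST i. i < length bs \<and> v \<in> bs!i)" for v
  have lP: "l v < length bs \<and> v \<in> bs!(l v)" if "v \<in> S" for v
  proof -
    from that sub pd_cov[OF pd] obtain i where "i < length bs \<and> v \<in> bs!i"
      by blast
    then show ?thesis unfolding l_def by (rule LeastI)
  qed
  have lmin: "l v \<le> i" if "i < length bs" "v \<in> bs!i" for v i
    unfolding l_def using that by (simp add: Least_le)
  obtain v0 where v0: "v0 \<in> S" "\<forall>u\<in>S. l u \<le> l v0"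
  proof -
    have "Max (l ` S) \<in> l ` S" using fin ne by simp
    then obtain v0 where "v0 \<in> S" "l v0 = Max (l ` S)" by auto
    moreover have "\<forall>u\<in>S. l u \<le> Max (l ` S)" using fin by simp
    ultimately show ?thesis using that by auto
  qed
  have "S \<subseteq> bs!(l v0)"
  proof
    fix u assume u: "u \<in> S"
    show "u \<in> bs!(l v0)"
    proof (cases "u = v0")
      case True then show ?thesis using lP u by simp
    next
      case False
      then have "{u,v0} \<in> E" using cl u v0 by blast
      then obtain j where j: "j < length bs" "{u,v0} \<subseteq> bs!j"
        using pd_edge[OF pd] by blast
      have "l v0 \<le> j" using j lmin by auto
      moreover have "l u \<le> l v0" using v0 u by auto
      moreover have "u \<in> bs!(l u)" using lP u by auto
      moreover have "u \<in> bs!j" using j by auto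
      ultimately show ?thesis using pd_conv[OF pd _ _ j(1)] by blast
    qed
  qed
  then show ?thesis using lP v0 by blast
qed

lemma card_two:
  assumes "(\<lambda>j. (j,None)) ` L \<subseteq> B" "(\<lambda>j. (i0::nat, Some j)) ` {..<m} \<subseteq> B"
    "finite B" "finite L"
  shows "card L + m \<le> card (B :: (nat \<times> nat option) set)"
proof -
  have "card ((\<lambda>j. (j,None)) ` L \<union> (\<lambda>j. (i0, Some j)) ` {..<m}) = card L + m"
    by (subst card_Un_disjoint) (auto simp: card_image inj_on_def assms(4))
  moreover have "card ((\<lambda>j. (j,None)) ` L \<union> (\<lambda>j. (i0, Some j)) ` {..<m}) \<le> card B"
    using assms by (intro card_mono) auto
  ultimately show ?thesis by simp
qed

lemma cores_eq: "{(i, None) | i. i < n} = (\<lambda>j. (j, None::nat option)) ` {..<n}"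
  by auto

lemma width_ge:
  assumes "k < length bs" shows "int (card (bs!k)) - 1 \<le> pd_width bs"
proof -
  have "card (bs!k) \<le> Max (card ` set bs)"
    using assms by (intro Max_ge) auto
  then show ?thesis unfolding pd_width_def by simp
qed

lemma lower:
  assumes n2: "n \<ge> 2" and m1: "m \<ge> 1"
    and pd: "is_path_decomposition (corona_KK_vertices n m) (corona_KK_edges n m) bs"
  shows "int n + max 0 (int m - int (n div 2)) - 1 \<le> pd_width bs"
proof -
  let ?V = "corona_KK_vertices n m" and ?E = "corona_KK_edges n m"
  have bagsub: "bs!k \<subseteq> ?V" if "k < length bs" for k
    using pd_sub[OF pd that] .
  have finb: "finite (bs!k)" if "k < length bs" for k
    using bagsub[OF that] corona_fin finite_subset by blast
  have conv: "v \<in> bs!j" if "i \<le> j" "j \<le> k" "k < length bs" "v \<in> bs!i" "v \<in> bs!k" for v i j k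
    using pd_conv[OF pd] that by blast
  obtain s where s: "s < length bs" "{(i, None) | i. i < n} \<subseteq> bs!s"
  proof -
    have "\<exists>i<length bs. {(i, None) | i. i < n} \<subseteq> bs!i"
    proof (rule helly[OF pd])
      show "finite {(i, None::nat option) | i. i < n}" unfolding cores_eq by simp
      show "{(i, None::nat option) | i. i < n} \<noteq> {}" using n2 by (auto intro!: exI[of _ 0])
      show "{(i, None) | i. i < n} \<subseteq> ?V" unfolding corona_KK_vertices_def by auto
      show "\<forall>x\<in>{(i, None) | i. i < n}. \<forall>y\<in>{(i, None) | i. i < n}. x \<noteq> y \<longrightarrow> {x, y} \<in> ?E"
        unfolding corona_KK_edges_def complete_edges_def by blast
    qed
    then show ?thesis using that by blast
  qed
  define Q :: "nat \<Rightarrow> (nat \<times> nat option) set" where "Q i = insert (i, None) ((\<lambda>j. (i, Some j)) ` {..<m})" for i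
  have "\<exists>t<length bs. Q i \<subseteq> bs!t" if "i < n" for i
  proof (rule helly[OF pd])
    show "finite (Q i)" "Q i \<noteq> {}" unfolding Q_def by auto
    show "Q i \<subseteq> ?V" using that unfolding Q_def corona_KK_vertices_def by auto
    show "\<forall>x\<in>Q i. \<forall>y\<in>Q i. x \<noteq> y \<longrightarrow> {x, y} \<in> ?E"
    proof (intro ballI impI)
      fix x y assume x: "x \<in> Q i" and y: "y \<in> Q i" and xy: "x \<noteq> y"
      show "{x,y} \<in> ?E"
      proof (cases "x = (i,None)")
        case True
        then obtain j where "y = (i, Some j)" "j < m" using y xy unfolding Q_def by auto
        then show ?thesis using True that unfolding corona_KK_edges_def by blast
      next
        case False
        then obtain j where j: "x = (i, Some j)" "j < m" using x unfolding Q_def by auto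
        show ?thesis
        proof (cases "y = (i,None)")
          case True
          then have "{x,y} = {(i,None),(i,Some j)}" using j by auto
          then show ?thesis using j that unfolding corona_KK_edges_def by blast
        next
          case False
          then obtain j' where j': "y = (i, Some j')" "j' < m" using y unfolding Q_def by auto
          have "{x,y} \<in> complete_edges {(i, Some j) | j. j < m}"
            unfolding complete_edges_def using j j' xy by blast
          then show ?thesis using that unfolding corona_KK_edges_def by blast
        qed
      qed
    qed
  qed
  then obtain t where t: "\<forall>i<n. t i < length bs \<and> Q i \<subseteq> bs!(t i)" by metis
  have coreQ: "(i, None) \<in> bs!(t i)" if "i < n" for i using t that unfolding Q_def by auto
  have pendQ: "(\<lambda>j. (i, Some j)) ` {..<m} \<subseteq> bs!(t i)" if "i < n" for i
    using t that unfolding Q_def by auto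
  have cs: "n \<le> card (bs!s)"
  proof -
    have "card ((\<lambda>j. (j, None::nat option)) ` {..<n}) \<le> card (bs!s)"
      using s finb[OF s(1)] unfolding cores_eq by (intro card_mono) auto
    then show ?thesis by (simp add: card_image inj_on_def)
  qed
  have ws: "int n - 1 \<le> pd_width bs" using width_ge[OF s(1)] cs by linarith
  define L where "L = {i. i < n \<and> t i \<le> s}"
  define R where "R = {i. i < n \<and> s \<le> t i}"
  have finL: "finite L" and finR: "finite R" unfolding L_def R_def by auto
  have "{..<n} = L \<union> R" unfolding L_def R_def by auto
  then have "n \<le> card L + card R" using card_Un_le[of L R] by (metis card_lessThan)
  then have cases: "n \<le> 2 * card L \<or> n \<le> 2 * card R" by linarith
  obtain c i0 where c: "n \<le> 2 * c" "i0 < n" "c + m \<le> card (bs!(t i0))"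
  proof (cases "n \<le> 2 * card L")
    case True
    then have "L \<noteq> {}" using n2 by auto
    then have "Max (t ` L) \<in> t ` L" using finL by simp
    then obtain i0 where i0: "i0 \<in> L" "t i0 = Max (t ` L)" by auto
    have "(\<lambda>j. (j,None::nat option)) ` L \<subseteq> bs!(t i0)"
    proof
      fix x assume "x \<in> (\<lambda>j. (j,None::nat option)) ` L"
      then obtain j where j: "j \<in> L" "x = (j,None)" by auto
      have "t j \<le> t i0" using i0 j finL by simp
      moreover have "t i0 \<le> s" using i0 unfolding L_def by auto
      moreover have "(j,None) \<in> bs!s" using s j unfolding L_def by auto
      moreover have "(j,None) \<in> bs!(t j)" using coreQ j unfolding L_def by auto
      ultimately show "x \<in> bs!(t i0)" using conv[of "t j" "t i0" s "(j,None)"] s(1) j by simp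
    qed
    moreover have "i0 < n" using i0 unfolding L_def by auto
    ultimately have "card L + m \<le> card (bs!(t i0))"
      using pendQ[of i0] t finb finL by (intro card_two[of _ _ i0]) auto
    then show ?thesis using that True \<open>i0 < n\<close> by blast
  next
    case False
    then have RR: "n \<le> 2 * card R" using cases by auto
    then have "R \<noteq> {}" using n2 by auto
    then have "Min (t ` R) \<in> t ` R" using finR by simp
    then obtain i0 where i0: "i0 \<in> R" "t i0 = Min (t ` R)" by auto
    have "(\<lambda>j. (j,None::nat option)) ` R \<subseteq> bs!(t i0)"
    proof
      fix x assume "x \<in> (\<lambda>j. (j,None::nat option)) ` R"
      then obtain j where j: "j \<in> R" "x = (j,None)" by auto
      have "t i0 \<le> t j" using i0 j finR by simp
      moreover have "s \<le> t i0" using i0 unfolding R_def by auto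
      moreover have "(j,None) \<in> bs!s" using s j unfolding R_def by auto
      moreover have "(j,None) \<in> bs!(t j)" "t j < length bs" using coreQ t j unfolding R_def by auto
      ultimately show "x \<in> bs!(t i0)" using conv[of s "t i0" "t j" "(j,None)"] j by simp
    qed
    moreover have "i0 < n" using i0 unfolding R_def by auto
    ultimately have "card R + m \<le> card (bs!(t i0))"
      using pendQ[of i0] t finb finR by (intro card_two[of _ _ i0]) auto
    then show ?thesis using that RR \<open>i0 < n\<close> by blast
  qed
  have w2: "int (c + m) - 1 \<le> pd_width bs"
    using width_ge[of "t i0" bs] t c by force
  have "n \<le> c + n div 2" using c(1) by presburger
  then show ?thesis using ws w2 by linarith
qed

fun lo :: "nat \<Rightarrow> nat \<times> nat option \<Rightarrow> nat" where
  "lo a (j, None) = (if j < a then j else a)"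
| "lo a (i, Some _) = (if i < a then i else i + 1)"

fun hi :: "nat \<Rightarrow> nat \<times> nat option \<Rightarrow> nat" where
  "hi a (j, None) = (if j < a then a else j + 1)"
| "hi a (i, Some _) = (if i < a then i else i + 1)"

definition bagU :: "nat \<Rightarrow> nat \<Rightarrow> nat \<Rightarrow> (nat \<times> nat option) set" where
  "bagU n m k = {v \<in> corona_KK_vertices n m. lo (n div 2) v \<le> k \<and> k \<le> hi (n div 2) v}"

lemma upper:
  assumes n2: "n \<ge> 2" and m1: "m \<ge> 1"
  defines "bs \<equiv> map (bagU n m) [0..<n+1]"
  shows "is_path_decomposition (corona_KK_vertices n m) (corona_KK_edges n m) bs"
    and "pd_width bs \<le> int n + max 0 (int m - int (n div 2)) - 1"
proof -
  let ?a = "n div 2"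
  let ?V = "corona_KK_vertices n m"
  have len: "length bs = n + 1" unfolding bs_def by simp
  have nth: "bs ! k = bagU n m k" if "k < n + 1" for k unfolding bs_def using that
    by (simp del: upt_Suc)
  have lohi: "lo ?a v \<le> hi ?a v \<and> hi ?a v \<le> n" if "v \<in> ?V" for v
    using that n2 unfolding corona_KK_vertices_def by auto
  show "is_path_decomposition ?V (corona_KK_edges n m) bs"
    unfolding is_path_decomposition_def
  proof (intro conjI allI ballI impI)
    show "bs \<noteq> []" using len by auto
    show "bs ! i \<subseteq> ?V" if "i < length bs" for i
      using that len nth unfolding bagU_def by auto
    show "\<exists>i<length bs. v \<in> bs ! i" if "v \<in> ?V" for v
      using that lohi[OF that] len nth[of "lo ?a v"] unfolding bagU_def
      by (intro exI[of _ "lo ?a v"]) auto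
    show "v \<in> bs ! j" if "i \<le> j \<and> j \<le> k \<and> k < length bs \<and> v \<in> bs ! i \<and> v \<in> bs ! k" for v i j k
      using that len nth[of i] nth[of j] nth[of k] unfolding bagU_def by auto
    show "\<exists>i<length bs. e \<subseteq> bs ! i" if "e \<in> corona_KK_edges n m" for e
    proof -
      from edges_cases[OF that] show ?thesis
      proof (elim disjE exE conjE)
        fix x y assume "e = {(x, None), (y, None)}" "x < n" "y < n"
        then show ?thesis using len nth[of ?a] n2 unfolding bagU_def corona_KK_vertices_def
          by (intro exI[of _ ?a]) auto
      next
        fix i x y assume "e = {(i, Some x), (i, Some y)}" "i < n" "x < m" "y < m"
        then show ?thesis using len nth[of "lo ?a (i, Some x)"] n2 unfolding bagU_def corona_KK_vertices_def
          by (intro exI[of _ "lo ?a (i, Some x)"]) auto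
      next
        fix i j assume "e = {(i, None), (i, Some j)}" "i < n" "j < m"
        then show ?thesis using len nth[of "lo ?a (i, Some j)"] n2 unfolding bagU_def corona_KK_vertices_def
          by (intro exI[of _ "lo ?a (i, Some j)"]) auto
      qed
    qed
  qed
  have cardb: "card (bagU n m k) \<le> n + (m - ?a)" if "k < n + 1" for k
  proof -
    have fin: "finite ((\<lambda>j. (j, None::nat option)) ` C \<union> (\<lambda>j. (p::nat, Some j)) ` {..<m})" if "finite C" for C p
      using that by simp
    have cU: "card ((\<lambda>j. (j, None::nat option)) ` C \<union> (\<lambda>j. (p::nat, Some j)) ` {..<m}) \<le> card C + m" if "finite C" for C p
      using card_Un_le[of "(\<lambda>j. (j, None::nat option)) ` C" "(\<lambda>j. (p::nat, Some j)) ` {..<m}"]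
        card_image_le[of C "\<lambda>j. (j, None::nat option)"] card_image_le[of "{..<m}" "\<lambda>j. (p::nat, Some j)"]
      using that by auto
    consider "k = ?a" | "k < ?a" | "?a < k" by linarith
    then show ?thesis
    proof cases
      case 1
      have "bagU n m k \<subseteq> (\<lambda>j. (j, None::nat option)) ` {..<n}"
      proof
        fix v assume "v \<in> bagU n m k"
        then show "v \<in> (\<lambda>j. (j, None::nat option)) ` {..<n}"
          using 1 unfolding bagU_def corona_KK_vertices_def by (auto split: if_splits)
      qed
      then have "card (bagU n m k) \<le> card ((\<lambda>j. (j, None::nat option)) ` {..<n})"
        by (intro card_mono) auto
      also have "\<dots> \<le> n" using card_image_le[of "{..<n}" "\<lambda>j. (j, None::nat option)"] by simp
      finally show ?thesis by simp
    next
      case 2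
      have "bagU n m k \<subseteq> (\<lambda>j. (j, None::nat option)) ` {..<k+1} \<union> (\<lambda>j. (k, Some j)) ` {..<m}"
      proof
        fix v assume "v \<in> bagU n m k"
        then show "v \<in> (\<lambda>j. (j, None::nat option)) ` {..<k+1} \<union> (\<lambda>j. (k, Some j)) ` {..<m}"
          using 2 unfolding bagU_def corona_KK_vertices_def by (auto split: if_splits)
      qed
      then have "card (bagU n m k) \<le> card ((\<lambda>j. (j, None::nat option)) ` {..<k+1} \<union> (\<lambda>j. (k, Some j)) ` {..<m})"
        by (intro card_mono fin) auto
      also have "\<dots> \<le> k + 1 + m" using cU[of "{..<k+1}" k] by simp
      finally show ?thesis using 2 by linarith
    next
      case 3
      have "bagU n m k \<subseteq> (\<lambda>j. (j, None::nat option)) ` {k-1..<n} \<union> (\<lambda>j. (k-1, Some j)) ` {..<m}"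
      proof
        fix v assume "v \<in> bagU n m k"
        then show "v \<in> (\<lambda>j. (j, None::nat option)) ` {k-1..<n} \<union> (\<lambda>j. (k-1, Some j)) ` {..<m}"
          using 3 unfolding bagU_def corona_KK_vertices_def by (auto split: if_splits)
      qed
      then have "card (bagU n m k) \<le> card ((\<lambda>j. (j, None::nat option)) ` {k-1..<n} \<union> (\<lambda>j. (k-1, Some j)) ` {..<m})"
        by (intro card_mono fin) auto
      also have "\<dots> \<le> n - (k - 1) + m" using cU[of "{k-1..<n}" "k-1"] by simp
      finally show ?thesis using 3 by linarith
    qed
  qed
  have "Max (card ` set bs) \<le> n + (m - ?a)"
    using len by (subst Max_le_iff) (auto simp: bs_def intro!: cardb)
  then show "pd_width bs \<le> int n + max 0 (int m - int (n div 2)) - 1"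
    unfolding pd_width_def by linarith
qed

theorem mainTheorem20:
  fixes n m :: nat
  assumes "n \<ge> 2" and "m \<ge> 1"
  shows "pathwidth (corona_KK_vertices n m) (corona_KK_edges n m)
           = int n + max 0 (int m - int (n div 2)) - 1"
  unfolding pathwidth_def
proof (rule Least_equality)
  let ?bs = "map (bagU n m) [0..<n+1]"
  have "pd_width ?bs = int n + max 0 (int m - int (n div 2)) - 1"
    using upper[OF assms] lower[OF assms upper(1)[OF assms]] by linarith
  then show "\<exists>bs. is_path_decomposition (corona_KK_vertices n m) (corona_KK_edges n m) bs \<and>
      pd_width bs = int n + max 0 (int m - int (n div 2)) - 1"
    using upper(1)[OF assms] by blast
next
  fix y assume "\<exists>bs. is_path_decomposition (corona_KK_vertices n m) (corona_KK_edges n m) bs \<and> pd_width bs = y"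
  then show "int n + max 0 (int m - int (n div 2)) - 1 \<le> y" using lower[OF assms] by blast
qed

end
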